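(* Let $R=\prod_{i=1}^m R_i$ be a finite commutative ring which is the direct product of the rings $R_1,\dots,R_m$, let $K\le R^\times$, and let $\mathcal C=\mathrm{Cyc}(K,R)$. For each $i$ let $\varphi_i:R_i^\times\to R^\times$ be the monomorphism such that the $j$th component of $\varphi_i(x)$ is $x$ for $j=i$ and $1_{R_j}$ for $j\ne i$; let $K_i\le R_i^\times$ be defined by $\varphi_i(K_i)=K\cap\varphi_i(R_i^\times)$, and let $\mathcal C_i=\mathrm{Cyc}(K_i,R_i)$. Put $u=0_R$, $v=1_R$, $u_i=0_{R_i}$, $v_i=1_{R_i}$. Then $$\mathrm{Aut}(\mathcal C)_{u,v}=\prod_{i=1}^m \mathrm{Aut}(\mathcal C_i)_{u_i,v_i},$$ where the right-hand side acts on $R=\prod_i R_i$ componentwise. In particular, $\mathcal C$ is normal if and only if $\mathcal C_i$ is normal for every $i$.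
   Context: All rings have an identity. For a finite commutative ring $R$ and a subgroup $K$ of its multiplicative group $R^\times$, the cyclotomic scheme $\mathrm{Cyc}(K,R)$ is the pair $(R,\mathrm{Rel}(K,R))$, where $\mathrm{Rel}(K,R)$ is the set of binary relations $\{(x,y)\in R\times R:\ y-x\in rK\}$, $r\in R$ (these partition $R\times R$). Its automorphism group $\mathrm{Aut}(\mathcal C)$ is the group of all permutations $f$ of $R$ with $S^f=S$ for every $S\in\mathrm{Rel}(K,R)$. For points $a,b$, $\mathrm{Aut}(\mathcal C)_{a,b}$ is the pointwise stabilizer of $a$ and $b$. $\mathrm{A\Gamma L}_1(R)$ is the group of permutations of $R$ of the form $x\mapsto ax^\sigma+b$ with $a\in R^\times$, $b\in R$, $\sigma\in\mathrm{Aut}(R)$ (ring automorphisms). The scheme $\mathcal C$ is called normal if $\mathrm{Aut}(\mathcal C)\le\mathrm{A\Gamma L}_1(R)$. *)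

theory Defs
  imports "HOL-Algebra.Algebra" "HOL-Library.FuncSet"
begin

definition cyc_rel :: "('a, 'b) ring_scheme \<Rightarrow> 'a set \<Rightarrow> 'a \<Rightarrow> ('a \<times> 'a) set" where
  "cyc_rel R K r = {(x, y). x \<in> carrier R \<and> y \<in> carrier R \<and>
                     y \<ominus>\<^bsub>R\<^esub> x \<in> (\<lambda>k. r \<otimes>\<^bsub>R\<^esub> k) ` K}"

definition cyc_rels :: "'a set \<Rightarrow> ('a, 'b) ring_scheme \<Rightarrow> ('a \<times> 'a) set set" where
  "cyc_rels K R = cyc_rel R K ` carrier R"

definition cyc_aut :: "'a set \<Rightarrow> ('a, 'b) ring_scheme \<Rightarrow> ('a \<Rightarrow> 'a) set" where
  "cyc_aut K R = {f. f \<in> carrier R \<rightarrow>\<^sub>E carrier R \<and> bij_betw f (carrier R) (carrier R) \<and>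
                      (\<forall>S \<in> cyc_rels K R. (\<lambda>(x, y). (f x, f y)) ` S = S)}"

definition cyc_aut_stab :: "'a set \<Rightarrow> ('a, 'b) ring_scheme \<Rightarrow> 'a \<Rightarrow> 'a \<Rightarrow> ('a \<Rightarrow> 'a) set" where
  "cyc_aut_stab K R a b = {f \<in> cyc_aut K R. f a = a \<and> f b = b}"

definition AGammaL1 :: "('a, 'b) ring_scheme \<Rightarrow> ('a \<Rightarrow> 'a) set" where
  "AGammaL1 R = {f. f \<in> carrier R \<rightarrow>\<^sub>E carrier R \<and>
      (\<exists>a \<in> Units R. \<exists>b \<in> carrier R. \<exists>\<sigma> \<in> ring_iso R R.
          \<forall>x \<in> carrier R. f x = a \<otimes>\<^bsub>R\<^esub> \<sigma> x \<oplus>\<^bsub>R\<^esub> b)}"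

definition cyc_normal :: "'a set \<Rightarrow> ('a, 'b) ring_scheme \<Rightarrow> bool" where
  "cyc_normal K R \<longleftrightarrow> cyc_aut K R \<subseteq> AGammaL1 R"

definition prod_ring :: "nat \<Rightarrow> (nat \<Rightarrow> ('a, 'b) ring_scheme) \<Rightarrow> (nat \<Rightarrow> 'a) ring" where
  "prod_ring m Rs =
     \<lparr> carrier = (\<Pi>\<^sub>E i\<in>{..<m}. carrier (Rs i)),
       Group.monoid.mult = (\<lambda>x y. \<lambda>i\<in>{..<m}. x i \<otimes>\<^bsub>Rs i\<^esub> y i),
       one = (\<lambda>i\<in>{..<m}. \<one>\<^bsub>Rs i\<^esub>),
       Ring.ring.zero = (\<lambda>i\<in>{..<m}. \<zero>\<^bsub>Rs i\<^esub>),
       Ring.ring.add = (\<lambda>x y. \<lambda>i\<in>{..<m}. x i \<oplus>\<^bsub>Rs i\<^esub> y i) \<rparr>"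

definition prod_embed :: "nat \<Rightarrow> (nat \<Rightarrow> ('a, 'b) ring_scheme) \<Rightarrow> nat \<Rightarrow> 'a \<Rightarrow> (nat \<Rightarrow> 'a)" where
  "prod_embed m Rs i x = (\<lambda>j\<in>{..<m}. if j = i then x else \<one>\<^bsub>Rs j\<^esub>)"

definition comp_subgroup :: "nat \<Rightarrow> (nat \<Rightarrow> ('a, 'b) ring_scheme) \<Rightarrow> (nat \<Rightarrow> 'a) set \<Rightarrow> nat \<Rightarrow> 'a set" where
  "comp_subgroup m Rs K i = {x \<in> Units (Rs i). prod_embed m Rs i x \<in> K}"

definition prod_map :: "nat \<Rightarrow> (nat \<Rightarrow> ('a, 'b) ring_scheme) \<Rightarrow> (nat \<Rightarrow> 'a \<Rightarrow> 'a) \<Rightarrow> (nat \<Rightarrow> 'a) \<Rightarrow> (nat \<Rightarrow> 'a)" where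
  "prod_map m Rs fs = (\<lambda>x\<in>carrier (prod_ring m Rs). \<lambda>i\<in>{..<m}. fs i (x i))"

end

theory Submission
  imports Defs
begin


lemma prod_carrier: "carrier (prod_ring m Rs) = (\<Pi>\<^sub>E i\<in>{..<m}. carrier (Rs i))"
  by (simp add: prod_ring_def)
lemma prod_mult: "x \<otimes>\<^bsub>prod_ring m Rs\<^esub> y = (\<lambda>i\<in>{..<m}. x i \<otimes>\<^bsub>Rs i\<^esub> y i)"
  by (simp add: prod_ring_def)
lemma prod_add: "x \<oplus>\<^bsub>prod_ring m Rs\<^esub> y = (\<lambda>i\<in>{..<m}. x i \<oplus>\<^bsub>Rs i\<^esub> y i)"
  by (simp add: prod_ring_def)
lemma prod_one: "\<one>\<^bsub>prod_ring m Rs\<^esub> = (\<lambda>i\<in>{..<m}. \<one>\<^bsub>Rs i\<^esub>)"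
  by (simp add: prod_ring_def)
lemma prod_zero: "\<zero>\<^bsub>prod_ring m Rs\<^esub> = (\<lambda>i\<in>{..<m}. \<zero>\<^bsub>Rs i\<^esub>)"
  by (simp add: prod_ring_def)

lemmas prod_simps = prod_carrier prod_mult prod_add prod_one prod_zero

lemma prod_cring:
  assumes cr: "\<And>i. i < m \<Longrightarrow> cring (Rs i)"
  shows "cring (prod_ring m Rs)"
proof (rule cringI)
  have R: "\<And>i. i < m \<Longrightarrow> ring (Rs i)" using cr cring.axioms(1) by blast
  show "abelian_group (prod_ring m Rs)"
  proof (rule abelian_groupI)
    fix x assume x: "x \<in> carrier (prod_ring m Rs)"
    show "\<exists>y\<in>carrier (prod_ring m Rs). y \<oplus>\<^bsub>prod_ring m Rs\<^esub> x = \<zero>\<^bsub>prod_ring m Rs\<^esub>"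
      apply (rule bexI[of _ "\<lambda>i\<in>{..<m}. \<ominus>\<^bsub>Rs i\<^esub> x i"])
      using x by (auto simp: prod_simps PiE_iff intro!: ext ring.ring_simprules R)
  qed (auto simp: prod_simps PiE_iff extensional_def intro!: ext ring.ring_simprules R)
  show "comm_monoid (prod_ring m Rs)"
    by (rule comm_monoidI) (auto simp: prod_simps PiE_iff extensional_def intro!: ext ring.ring_simprules R cring.cring_simprules cr)
  show "\<And>x y z. x \<in> carrier (prod_ring m Rs) \<Longrightarrow> y \<in> carrier (prod_ring m Rs) \<Longrightarrow> z \<in> carrier (prod_ring m Rs) \<Longrightarrow>
    (x \<oplus>\<^bsub>prod_ring m Rs\<^esub> y) \<otimes>\<^bsub>prod_ring m Rs\<^esub> z = x \<otimes>\<^bsub>prod_ring m Rs\<^esub> z \<oplus>\<^bsub>prod_ring m Rs\<^esub> y \<otimes>\<^bsub>prod_ring m Rs\<^esub> z"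
    by (auto simp: prod_simps PiE_iff intro!: ext ring.ring_simprules R)
qed



lemma K_props:
  assumes "monoid R" "subgroup K (units_of R)"
  shows "K \<subseteq> Units R" "\<one>\<^bsub>R\<^esub> \<in> K" "\<And>a b. a \<in> K \<Longrightarrow> b \<in> K \<Longrightarrow> a \<otimes>\<^bsub>R\<^esub> b \<in> K"
    "\<And>a. a \<in> K \<Longrightarrow> inv\<^bsub>R\<^esub> a \<in> K"
proof -
  show 1: "K \<subseteq> Units R" using subgroup.subset[OF assms(2)] by (simp add: units_of_carrier)
  show "\<one>\<^bsub>R\<^esub> \<in> K" using subgroup.one_closed[OF assms(2)] by (simp add: units_of_one)
  show "\<And>a b. a \<in> K \<Longrightarrow> b \<in> K \<Longrightarrow> a \<otimes>\<^bsub>R\<^esub> b \<in> K"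
    using subgroup.m_closed[OF assms(2)] by (simp add: units_of_mult)
  show "\<And>a. a \<in> K \<Longrightarrow> inv\<^bsub>R\<^esub> a \<in> K"
    using subgroup.m_inv_closed[OF assms(2)] monoid.units_of_inv[OF assms(1)] 1 by force
qed

definition good :: "'a set \<Rightarrow> ('a, 'b) ring_scheme \<Rightarrow> ('a \<Rightarrow> 'a) \<Rightarrow> bool" where
  "good K R f \<longleftrightarrow> (\<forall>x\<in>carrier R. \<forall>y\<in>carrier R. \<exists>k\<in>K. f y \<ominus>\<^bsub>R\<^esub> f x = (y \<ominus>\<^bsub>R\<^esub> x) \<otimes>\<^bsub>R\<^esub> k)"

lemma cyc_aut_iff:
  fixes R (structure)
  assumes cr: "cring R" and fin: "finite (carrier R)" and KC: "K \<subseteq> carrier R"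
    and K1: "\<one> \<in> K" and Km: "\<And>a b. a \<in> K \<Longrightarrow> b \<in> K \<Longrightarrow> a \<otimes> b \<in> K"
  shows "f \<in> cyc_aut K R \<longleftrightarrow> f \<in> carrier R \<rightarrow>\<^sub>E carrier R \<and> inj_on f (carrier R) \<and> good K R f"
proof -
  interpret cring R by fact
  note Kp = KC K1 Km
  show ?thesis
  proof
    assume f: "f \<in> cyc_aut K R"
    have fe: "f \<in> carrier R \<rightarrow>\<^sub>E carrier R" and bij: "bij_betw f (carrier R) (carrier R)"
      and S: "\<And>S. S \<in> cyc_rels K R \<Longrightarrow> (\<lambda>(x, y). (f x, f y)) ` S = S"
      using f by (auto simp: cyc_aut_def)
    have "good K R f" unfolding good_def
    proof (intro ballI)
      fix x y assume x: "x \<in> carrier R" and y: "y \<in> carrier R"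
      let ?r = "y \<ominus> x"
      have r: "?r \<in> carrier R" using x y by simp
      have "cyc_rel R K ?r \<in> cyc_rels K R" using r by (simp add: cyc_rels_def)
      note S' = S[OF this]
      have "(x, y) \<in> cyc_rel R K ?r" using x y Kp(2) r
        by (auto simp: cyc_rel_def image_iff intro!: bexI[of _ "\<one>"])
      then have "(f x, f y) \<in> cyc_rel R K ?r" using S' by (metis (no_types, lifting) case_prod_conv image_eqI)
      then show "\<exists>k\<in>K. f y \<ominus> f x = ?r \<otimes> k" by (auto simp: cyc_rel_def)
    qed
    then show "f \<in> carrier R \<rightarrow>\<^sub>E carrier R \<and> inj_on f (carrier R) \<and> good K R f"
      using fe bij by (auto simp: bij_betw_def)
  next
    assume "f \<in> carrier R \<rightarrow>\<^sub>E carrier R \<and> inj_on f (carrier R) \<and> good K R f"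
    then have fe: "f \<in> carrier R \<rightarrow>\<^sub>E carrier R" and inj: "inj_on f (carrier R)" and g: "good K R f"
      by auto
    have fc: "f ` carrier R \<subseteq> carrier R" using fe by auto
    have bij: "bij_betw f (carrier R) (carrier R)"
      using endo_inj_surj[OF fin fc inj] inj by (simp add: bij_betw_def)
    have "(\<lambda>(x, y). (f x, f y)) ` S = S" if hS: "S \<in> cyc_rels K R" for S
    proof -
      obtain r where Sd: "S = cyc_rel R K r" and r: "r \<in> carrier R" using hS unfolding cyc_rels_def by (rule imageE)
      have sub: "S \<subseteq> carrier R \<times> carrier R" by (auto simp: Sd cyc_rel_def)
      have finS: "finite S" using finite_subset[OF sub] fin by simp
      have inS: "inj_on (\<lambda>(x, y). (f x, f y)) S"
        using inj sub by (auto simp: inj_on_def)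
      have imS: "(\<lambda>(x, y). (f x, f y)) ` S \<subseteq> S"
      proof clarify
        fix x y assume "(x, y) \<in> S"
        then obtain k where x: "x \<in> carrier R" and y: "y \<in> carrier R" and k: "k \<in> K"
          and e: "y \<ominus> x = r \<otimes> k" by (auto simp: Sd cyc_rel_def)
        obtain k' where k': "k' \<in> K" and e': "f y \<ominus> f x = (y \<ominus> x) \<otimes> k'"
          using g x y by (auto simp: good_def)
        have kc: "k \<in> carrier R" "k' \<in> carrier R" using k k' KC by auto
        have "f y \<ominus> f x = r \<otimes> (k \<otimes> k')" using e e' r kc by (simp add: m_assoc)
        moreover have "k \<otimes> k' \<in> K" using Kp(3) k k' by blast
        ultimately show "(f x, f y) \<in> S" using fc x y by (auto simp: Sd cyc_rel_def)
      qed
      show ?thesis using endo_inj_surj[OF finS imS inS] .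
    qed
    then show "f \<in> cyc_aut K R" using fe bij by (auto simp: cyc_aut_def)
  qed
qed



lemma iso_cong:
  fixes R (structure)
  assumes s: "\<sigma> \<in> ring_iso R R" and e: "\<And>x. x \<in> carrier R \<Longrightarrow> f x = \<sigma> x" and r: "ring R"
  shows "f \<in> ring_iso R R"
proof -
  have h: "\<sigma> \<in> ring_hom R R" and b: "bij_betw \<sigma> (carrier R) (carrier R)" using s by (auto simp: ring_iso_def)
  interpret ring R by fact
  have "f \<in> ring_hom R R"
    by (rule ring_hom_memI) (simp_all add: e ring_hom_closed[OF h] ring_hom_mult[OF h] ring_hom_add[OF h] ring_hom_one[OF h])
  moreover have "bij_betw f (carrier R) (carrier R)" using b bij_betw_cong e by blast
  ultimately show ?thesis by (simp add: ring_iso_def)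
qed

lemma stab_agl:
  fixes R (structure)
  assumes cr: "cring R" and f: "f \<in> cyc_aut_stab K R \<zero> \<one>"
  shows "f \<in> AGammaL1 R \<longleftrightarrow> f \<in> ring_iso R R"
proof -
  interpret cring R by fact
  have fE: "f \<in> carrier R \<rightarrow>\<^sub>E carrier R" and f0: "f \<zero> = \<zero>" and f1: "f \<one> = \<one>"
    using f by (auto simp: cyc_aut_stab_def cyc_aut_def)
  show ?thesis
  proof
    assume "f \<in> AGammaL1 R"
    then obtain a b \<sigma> where a: "a \<in> Units R" and b: "b \<in> carrier R" and s: "\<sigma> \<in> ring_iso R R"
      and e: "\<And>x. x \<in> carrier R \<Longrightarrow> f x = a \<otimes> \<sigma> x \<oplus> b" by (auto simp: AGammaL1_def)
    have h: "\<sigma> \<in> ring_hom R R" using s by (simp add: ring_iso_def)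
    have ac: "a \<in> carrier R" using a by blast
    have "\<sigma> \<zero> = \<zero>" using ring_hom_zero[OF h] ring_axioms by blast
    then have "b = \<zero>" using e[of \<zero>] f0 ac b by simp
    moreover have "\<sigma> \<one> = \<one>" using ring_hom_one[OF h] .
    ultimately have "a = \<one>" using e[of \<one>] f1 ac by simp
    then have "\<And>x. x \<in> carrier R \<Longrightarrow> f x = \<sigma> x" using e \<open>b = \<zero>\<close> ring_hom_closed[OF h] by simp
    then show "f \<in> ring_iso R R" using iso_cong[OF s] ring_axioms by blast
  next
    assume s: "f \<in> ring_iso R R"
    have "f x = \<one> \<otimes> f x \<oplus> \<zero>" if x: "x \<in> carrier R" for x
    proof -
      have "f x \<in> carrier R" using fE x by auto
      then show ?thesis by simp
    qed
    then show "f \<in> AGammaL1 R" unfolding AGammaL1_def using fE s by blast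
  qed
qed

lemma normal_iff:
  fixes R (structure)
  assumes cr: "cring R" and fin: "finite (carrier R)" and KU: "K \<subseteq> Units R"
    and K1: "\<one> \<in> K" and Km: "\<And>a b. a \<in> K \<Longrightarrow> b \<in> K \<Longrightarrow> a \<otimes> b \<in> K"
    and Kinv: "\<And>a. a \<in> K \<Longrightarrow> inv a \<in> K"
  shows "cyc_normal K R \<longleftrightarrow> (\<forall>f\<in>cyc_aut_stab K R \<zero> \<one>. f \<in> ring_iso R R)"
proof -
  interpret cring R by fact
  have KC: "K \<subseteq> carrier R" using KU by blast
  note iff = cyc_aut_iff[OF cr fin KC K1 Km]
  show ?thesis
  proof
    assume "cyc_normal K R"
    then show "\<forall>f\<in>cyc_aut_stab K R \<zero> \<one>. f \<in> ring_iso R R"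
      using stab_agl[OF cr] by (auto simp: cyc_normal_def cyc_aut_stab_def)
  next
    assume H: "\<forall>f\<in>cyc_aut_stab K R \<zero> \<one>. f \<in> ring_iso R R"
    show "cyc_normal K R" unfolding cyc_normal_def
    proof
      fix f assume f: "f \<in> cyc_aut K R"
      have fE: "f \<in> carrier R \<rightarrow>\<^sub>E carrier R" and finj: "inj_on f (carrier R)" and fg: "good K R f"
        using f iff by auto
      have fc: "\<And>x. x \<in> carrier R \<Longrightarrow> f x \<in> carrier R" using fE by auto
      define c where "c = f \<zero>"
      have cc: "c \<in> carrier R" using fc by (simp add: c_def)
      obtain k where k: "k \<in> K" and ek: "f \<one> \<ominus> f \<zero> = (\<one> \<ominus> \<zero>) \<otimes> k"
        using fg by (auto simp: good_def)
      have kU: "k \<in> Units R" and kc: "k \<in> carrier R" using k KU by auto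
      have kd: "k = f \<one> \<ominus> c" using ek kc by (simp add: c_def minus_eq)
      have ikU: "inv k \<in> Units R" and ikc: "inv k \<in> carrier R" using kU by auto
      have ikk: "inv k \<otimes> k = \<one>" "k \<otimes> inv k = \<one>" using kU by auto
      define h where "h = (\<lambda>x\<in>carrier R. inv k \<otimes> (f x \<ominus> c))"
      have hc: "\<And>x. x \<in> carrier R \<Longrightarrow> h x \<in> carrier R" using fc cc ikc by (simp add: h_def)
      have hE: "h \<in> carrier R \<rightarrow>\<^sub>E carrier R" using hc by (auto simp: h_def)
      have hinj: "inj_on h (carrier R)"
      proof (rule inj_onI)
        fix x y assume x: "x \<in> carrier R" and y: "y \<in> carrier R" and e: "h x = h y"
        then have "inv k \<otimes> (f x \<ominus> c) = inv k \<otimes> (f y \<ominus> c)" by (simp add: h_def)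
        then have "f x \<ominus> c = f y \<ominus> c" using ikU fc[OF x] fc[OF y] cc by simp
        then have "(f x \<ominus> c) \<oplus> c = (f y \<ominus> c) \<oplus> c" by simp
        moreover have "(f x \<ominus> c) \<oplus> c = f x" "(f y \<ominus> c) \<oplus> c = f y"
          using fc[OF x] fc[OF y] cc by algebra+
        ultimately have "f x = f y" by simp
        then show "x = y" using finj x y by (auto dest: inj_onD)
      qed
      have hg: "good K R h" unfolding good_def
      proof (intro ballI)
        fix x y assume x: "x \<in> carrier R" and y: "y \<in> carrier R"
        obtain k' where k': "k' \<in> K" and e': "f y \<ominus> f x = (y \<ominus> x) \<otimes> k'"
          using fg x y by (auto simp: good_def)
        have k'c: "k' \<in> carrier R" using k' KC by blast
        have "h y \<ominus> h x = inv k \<otimes> (f y \<ominus> f x)"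
          using x y fc[OF x] fc[OF y] cc ikc by (simp add: h_def) algebra
        also have "\<dots> = inv k \<otimes> ((y \<ominus> x) \<otimes> k')" using e' by simp
        also have "\<dots> = (y \<ominus> x) \<otimes> (inv k \<otimes> k')" using x y ikc k'c by algebra
        finally show "\<exists>k\<in>K. h y \<ominus> h x = (y \<ominus> x) \<otimes> k" using Km[OF Kinv[OF k] k'] by blast
      qed
      have h0: "h \<zero> = \<zero>" using cc ikc by (simp add: h_def c_def[symmetric] minus_eq r_neg)
      have h1: "h \<one> = \<one>" using ikk kd by (simp add: h_def)
      have "h \<in> cyc_aut_stab K R \<zero> \<one>" using iff hE hinj hg h0 h1 by (simp add: cyc_aut_stab_def)
      then have hs: "h \<in> ring_iso R R" using H by blast
      have "\<And>x. x \<in> carrier R \<Longrightarrow> f x = k \<otimes> h x \<oplus> c"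
      proof -
        fix x assume x: "x \<in> carrier R"
        have "k \<otimes> h x \<oplus> c = (k \<otimes> inv k) \<otimes> (f x \<ominus> c) \<oplus> c"
          using x kc ikc fc[OF x] cc by (simp add: h_def m_assoc)
        also have "\<dots> = f x" using ikk fc[OF x] cc by simp algebra
        finally show "f x = k \<otimes> h x \<oplus> c" by simp
      qed
      then show "f \<in> AGammaL1 R" unfolding AGammaL1_def using fE kU cc hs by blast
    qed
  qed
qed



context
  fixes m :: nat and Rs :: "nat \<Rightarrow> ('a, 'b) ring_scheme" and K :: "(nat \<Rightarrow> 'a) set"
  assumes cr: "\<And>i. i < m \<Longrightarrow> cring (Rs i)"
    and fin: "\<And>i. i < m \<Longrightarrow> finite (carrier (Rs i))"
    and sg: "subgroup K (units_of (prod_ring m Rs))"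
begin

abbreviation "P \<equiv> prod_ring m Rs"

lemma Pcr: "cring P" using prod_cring cr by blast
lemma Pring: "ring P" using Pcr cring.axioms(1) by blast
lemma Pmon: "monoid P" using Pring ring.is_monoid by blast
lemma Ri: "i < m \<Longrightarrow> ring (Rs i)" using cr cring.axioms(1) by blast
lemma Pfin: "finite (carrier P)" unfolding prod_carrier by (rule finite_PiE) (auto intro: fin)

lemma one_c[simp]: "j < m \<Longrightarrow> \<one>\<^bsub>Rs j\<^esub> \<in> carrier (Rs j)" by (rule monoid.one_closed[OF ring.is_monoid[OF Ri]])
lemma zero_c[simp]: "j < m \<Longrightarrow> \<zero>\<^bsub>Rs j\<^esub> \<in> carrier (Rs j)" by (rule ring.ring_simprules(2)[OF Ri])
lemma one_one[simp]: "j < m \<Longrightarrow> \<one>\<^bsub>Rs j\<^esub> \<otimes>\<^bsub>Rs j\<^esub> \<one>\<^bsub>Rs j\<^esub> = \<one>\<^bsub>Rs j\<^esub>"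
  by (rule monoid.l_one[OF ring.is_monoid[OF Ri]]) simp_all

lemma KP: "K \<subseteq> Units P" "\<one>\<^bsub>P\<^esub> \<in> K" "\<And>a b. a \<in> K \<Longrightarrow> b \<in> K \<Longrightarrow> a \<otimes>\<^bsub>P\<^esub> b \<in> K"
    "\<And>a. a \<in> K \<Longrightarrow> inv\<^bsub>P\<^esub> a \<in> K"
  using K_props[OF Pmon sg] by auto

lemma KPC: "K \<subseteq> carrier P" using KP(1) monoid.Units_closed[OF Pmon] by blast

lemma prod_minus:
  assumes x: "x \<in> carrier P" and y: "y \<in> carrier P"
  shows "x \<ominus>\<^bsub>P\<^esub> y = (\<lambda>i\<in>{..<m}. x i \<ominus>\<^bsub>Rs i\<^esub> y i)"
proof -
  have "\<ominus>\<^bsub>P\<^esub> y = (\<lambda>i\<in>{..<m}. \<ominus>\<^bsub>Rs i\<^esub> y i)"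
    apply (rule abelian_group.minus_equality[OF ring.is_abelian_group[OF Pring]])
    using y by (auto simp: prod_simps PiE_iff intro!: ext ring.ring_simprules Ri)
  then show ?thesis using x y
    by (auto simp: a_minus_def prod_simps PiE_iff intro!: ext ring.ring_simprules Ri)
qed

lemma prod_units:
  assumes k: "k \<in> Units P" and i: "i < m"
  shows "k i \<in> Units (Rs i)"
proof -
  obtain x where x: "x \<in> carrier P" and k: "k \<in> carrier P" and e1: "x \<otimes>\<^bsub>P\<^esub> k = \<one>\<^bsub>P\<^esub>"
    and e2: "k \<otimes>\<^bsub>P\<^esub> x = \<one>\<^bsub>P\<^esub>" using k by (auto simp: Units_def)
  have "x i \<otimes>\<^bsub>Rs i\<^esub> k i = \<one>\<^bsub>Rs i\<^esub>" using fun_cong[OF e1, of i] i by (simp add: prod_simps)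
  moreover have "k i \<otimes>\<^bsub>Rs i\<^esub> x i = \<one>\<^bsub>Rs i\<^esub>" using fun_cong[OF e2, of i] i by (simp add: prod_simps)
  ultimately show ?thesis using x k i by (auto simp: Units_def prod_carrier PiE_iff)
qed

definition Ki :: "nat \<Rightarrow> 'a set" where "Ki i = comp_subgroup m Rs K i"

lemma embed_carrier: "i < m \<Longrightarrow> a \<in> carrier (Rs i) \<Longrightarrow> prod_embed m Rs i a \<in> carrier P"
  by (auto simp: prod_embed_def prod_carrier intro: ring.ring_simprules Ri)

lemma Ki_props:
  assumes i: "i < m"
  shows "Ki i \<subseteq> carrier (Rs i)" "\<one>\<^bsub>Rs i\<^esub> \<in> Ki i"
    "\<And>a b. a \<in> Ki i \<Longrightarrow> b \<in> Ki i \<Longrightarrow> a \<otimes>\<^bsub>Rs i\<^esub> b \<in> Ki i"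
proof -
  interpret R: ring "Rs i" using Ri i .
  show "Ki i \<subseteq> carrier (Rs i)" by (auto simp: Ki_def comp_subgroup_def)
  have "prod_embed m Rs i \<one>\<^bsub>Rs i\<^esub> = \<one>\<^bsub>P\<^esub>" by (auto simp: prod_embed_def prod_one)
  then show "\<one>\<^bsub>Rs i\<^esub> \<in> Ki i" using KP(2) by (auto simp: Ki_def comp_subgroup_def)
  fix a b assume a: "a \<in> Ki i" and b: "b \<in> Ki i"
  have au: "a \<in> Units (Rs i)" and bu: "b \<in> Units (Rs i)" using a b by (auto simp: Ki_def comp_subgroup_def)
  have ac: "a \<in> carrier (Rs i)" "b \<in> carrier (Rs i)" using au bu by auto
  have "prod_embed m Rs i (a \<otimes>\<^bsub>Rs i\<^esub> b) = prod_embed m Rs i a \<otimes>\<^bsub>P\<^esub> prod_embed m Rs i b"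
    using i by (auto simp: prod_embed_def prod_mult intro!: ext ring.ring_simprules Ri)
  moreover have "prod_embed m Rs i a \<otimes>\<^bsub>P\<^esub> prod_embed m Rs i b \<in> K"
    using KP(3) a b by (auto simp: Ki_def comp_subgroup_def)
  ultimately show "a \<otimes>\<^bsub>Rs i\<^esub> b \<in> Ki i" using au bu a b by (auto simp: Ki_def comp_subgroup_def)
qed

lemma Ki_iff:
  "i < m \<Longrightarrow> g \<in> cyc_aut (Ki i) (Rs i) \<longleftrightarrow>
     g \<in> carrier (Rs i) \<rightarrow>\<^sub>E carrier (Rs i) \<and> inj_on g (carrier (Rs i)) \<and> good (Ki i) (Rs i) g"
  using cyc_aut_iff[OF cr fin Ki_props] by blast

lemma P_iff:
  "f \<in> cyc_aut K P \<longleftrightarrow> f \<in> carrier P \<rightarrow>\<^sub>E carrier P \<and> inj_on f (carrier P) \<and> good K P f"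
  using cyc_aut_iff[OF Pcr Pfin KPC KP(2) KP(3)] by blast

lemma good_comp:
  assumes g: "good K P f" and fc: "f \<in> carrier P \<rightarrow> carrier P" and x: "x \<in> carrier P" and y: "y \<in> carrier P"
  shows "\<exists>k\<in>K. \<forall>i<m. f y i \<ominus>\<^bsub>Rs i\<^esub> f x i = (y i \<ominus>\<^bsub>Rs i\<^esub> x i) \<otimes>\<^bsub>Rs i\<^esub> k i"
proof -
  obtain k where k: "k \<in> K" and e: "f y \<ominus>\<^bsub>P\<^esub> f x = (y \<ominus>\<^bsub>P\<^esub> x) \<otimes>\<^bsub>P\<^esub> k"
    using g x y by (auto simp: good_def)
  have fx: "f x \<in> carrier P" "f y \<in> carrier P" using fc x y by auto
  show ?thesis
  proof (intro bexI[OF _ k] allI impI)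
    fix i assume i: "i < m"
    show "f y i \<ominus>\<^bsub>Rs i\<^esub> f x i = (y i \<ominus>\<^bsub>Rs i\<^esub> x i) \<otimes>\<^bsub>Rs i\<^esub> k i"
      using fun_cong[OF e, of i] i by (simp add: prod_minus[OF fx(2) fx(1)] prod_minus[OF y x] prod_mult)
  qed
qed

lemma P_elem: "x \<in> carrier P \<Longrightarrow> i < m \<Longrightarrow> x i \<in> carrier (Rs i)"
  by (auto simp: prod_carrier PiE_iff)

lemma agree:
  assumes f: "f \<in> cyc_aut K P" and x: "x \<in> carrier P" and y: "y \<in> carrier P" and i: "i < m"
    and e: "x i = y i"
  shows "f x i = f y i"
proof -
  have g: "good K P f" and fc: "f \<in> carrier P \<rightarrow> carrier P" using f P_iff by auto
  obtain k where k: "k \<in> K" and ee: "\<forall>i<m. f y i \<ominus>\<^bsub>Rs i\<^esub> f x i = (y i \<ominus>\<^bsub>Rs i\<^esub> x i) \<otimes>\<^bsub>Rs i\<^esub> k i"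
    using good_comp[OF g fc x y] by blast
  interpret R: ring "Rs i" using Ri i .
  have kc: "k i \<in> carrier (Rs i)" using k KPC i P_elem by blast
  have yc: "y i \<in> carrier (Rs i)" "f x i \<in> carrier (Rs i)" "f y i \<in> carrier (Rs i)"
    using y x fc i P_elem by blast+
  have z: "y i \<ominus>\<^bsub>Rs i\<^esub> y i = \<zero>\<^bsub>Rs i\<^esub>" using yc by (simp add: R.minus_eq R.r_neg)
  have "f y i \<ominus>\<^bsub>Rs i\<^esub> f x i = (y i \<ominus>\<^bsub>Rs i\<^esub> y i) \<otimes>\<^bsub>Rs i\<^esub> k i" using ee i e by simp
  then have "f y i \<ominus>\<^bsub>Rs i\<^esub> f x i = \<zero>\<^bsub>Rs i\<^esub>" using z kc by simp
  then show ?thesis using yc by simp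
qed

definition emb0 :: "nat \<Rightarrow> 'a \<Rightarrow> (nat \<Rightarrow> 'a)" where
  "emb0 i a = (\<lambda>j\<in>{..<m}. if j = i then a else \<zero>\<^bsub>Rs j\<^esub>)"

lemma emb0_c: "i < m \<Longrightarrow> a \<in> carrier (Rs i) \<Longrightarrow> emb0 i a \<in> carrier P"
  by (auto simp: emb0_def prod_carrier)

definition compf :: "((nat \<Rightarrow> 'a) \<Rightarrow> (nat \<Rightarrow> 'a)) \<Rightarrow> nat \<Rightarrow> 'a \<Rightarrow> 'a" where
  "compf f i = (\<lambda>a\<in>carrier (Rs i). f (emb0 i a) i)"

lemma f_eq:
  assumes f: "f \<in> cyc_aut K P" and x: "x \<in> carrier P"
  shows "f x = (\<lambda>i\<in>{..<m}. compf f i (x i))"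
proof -
  have fc: "f \<in> carrier P \<rightarrow>\<^sub>E carrier P" using f P_iff by auto
  have fx: "f x \<in> carrier P" using fc x by auto
  show ?thesis
  proof
    fix i show "f x i = (\<lambda>i\<in>{..<m}. compf f i (x i)) i"
    proof (cases "i < m")
      case True
      have xi: "x i \<in> carrier (Rs i)" using x True P_elem by blast
      have "f x i = f (emb0 i (x i)) i"
        by (rule agree[OF f x emb0_c[OF True xi] True]) (simp add: emb0_def True)
      then show ?thesis using True xi by (simp add: compf_def)
    next
      case False then show ?thesis using PiE_arb[OF fx[unfolded prod_carrier], of i] by simp
    qed
  qed
qed

lemma f_prod:
  assumes f: "f \<in> cyc_aut K P"
  shows "f = prod_map m Rs (compf f)"
proof
  fix x
  have fc: "f \<in> carrier P \<rightarrow>\<^sub>E carrier P" using f P_iff by auto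
  show "f x = prod_map m Rs (compf f) x"
  proof (cases "x \<in> carrier P")
    case True then show ?thesis using f_eq[OF f True] by (simp add: prod_map_def)
  next
    case False then show ?thesis using PiE_arb[OF fc False] by (simp add: prod_map_def)
  qed
qed

lemma l_one_i[simp]: "j < m \<Longrightarrow> x \<in> carrier (Rs j) \<Longrightarrow> \<one>\<^bsub>Rs j\<^esub> \<otimes>\<^bsub>Rs j\<^esub> x = x"
  by (rule monoid.l_one[OF ring.is_monoid[OF Ri]])
lemma r_one_i[simp]: "j < m \<Longrightarrow> x \<in> carrier (Rs j) \<Longrightarrow> x \<otimes>\<^bsub>Rs j\<^esub> \<one>\<^bsub>Rs j\<^esub> = x"
  by (rule monoid.r_one[OF ring.is_monoid[OF Ri]])

lemma Pzero_c: "\<zero>\<^bsub>P\<^esub> \<in> carrier P" using ring.ring_simprules(2)[OF Pring] .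
lemma Pone_c: "\<one>\<^bsub>P\<^esub> \<in> carrier P" using monoid.one_closed[OF Pmon] .

lemma comp_stab:
  assumes fs: "f \<in> cyc_aut_stab K P \<zero>\<^bsub>P\<^esub> \<one>\<^bsub>P\<^esub>" and i: "i < m"
  shows "compf f i \<in> cyc_aut_stab (Ki i) (Rs i) \<zero>\<^bsub>Rs i\<^esub> \<one>\<^bsub>Rs i\<^esub>"
proof -
  interpret R: ring "Rs i" using Ri i .
  have f: "f \<in> cyc_aut K P" and f0: "f \<zero>\<^bsub>P\<^esub> = \<zero>\<^bsub>P\<^esub>" and f1: "f \<one>\<^bsub>P\<^esub> = \<one>\<^bsub>P\<^esub>"
    using fs by (auto simp: cyc_aut_stab_def)
  have fc: "f \<in> carrier P \<rightarrow>\<^sub>E carrier P" and finj: "inj_on f (carrier P)" and fg: "good K P f"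
    using f P_iff by auto
  let ?g = "compf f i"
  have key: "\<And>z j. z \<in> carrier P \<Longrightarrow> j < m \<Longrightarrow> f z j = compf f j (z j)"
    using f_eq[OF f] by simp
  have gc: "\<And>a. a \<in> carrier (Rs i) \<Longrightarrow> ?g a \<in> carrier (Rs i)"
  proof -
    fix a assume a: "a \<in> carrier (Rs i)"
    have "f (emb0 i a) \<in> carrier P" using fc emb0_c[OF i a] by blast
    then show "?g a \<in> carrier (Rs i)" using a P_elem[OF _ i] by (simp add: compf_def)
  qed
  have gE: "?g \<in> carrier (Rs i) \<rightarrow>\<^sub>E carrier (Rs i)"
    using gc by (auto simp: compf_def)
  have ginj: "inj_on ?g (carrier (Rs i))"
  proof (rule inj_onI)
    fix a b assume a: "a \<in> carrier (Rs i)" and b: "b \<in> carrier (Rs i)" and e: "?g a = ?g b"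
    have Xa: "emb0 i a \<in> carrier P" "emb0 i b \<in> carrier P" using emb0_c i a b by auto
    have "f (emb0 i a) = f (emb0 i b)"
      using f_eq[OF f Xa(1)] f_eq[OF f Xa(2)] e by (auto simp: emb0_def intro!: ext)
    then have "emb0 i a = emb0 i b" using finj Xa by (auto dest: inj_onD)
    then have "emb0 i a i = emb0 i b i" by simp
    then show "a = b" using i by (simp add: emb0_def)
  qed
  have g0: "?g \<zero>\<^bsub>Rs i\<^esub> = \<zero>\<^bsub>Rs i\<^esub>"
    using key[OF Pzero_c i] f0 i by (simp add: prod_zero)
  have g1: "?g \<one>\<^bsub>Rs i\<^esub> = \<one>\<^bsub>Rs i\<^esub>"
    using key[OF Pone_c i] f1 i by (simp add: prod_one)
  have gg: "good (Ki i) (Rs i) ?g" unfolding good_def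
  proof (intro ballI)
    fix a b assume a: "a \<in> carrier (Rs i)" and b: "b \<in> carrier (Rs i)"
    define Xa where "Xa = emb0 i a"
    define Ya where "Ya = (\<lambda>j\<in>{..<m}. if j = i then b else \<one>\<^bsub>Rs j\<^esub>)"
    have Xc: "Xa \<in> carrier P" using emb0_c[OF i a] by (simp add: Xa_def)
    have Yc: "Ya \<in> carrier P" using b by (auto simp: Ya_def prod_carrier)
    obtain k where k: "k \<in> K" and ee: "\<forall>j<m. f Ya j \<ominus>\<^bsub>Rs j\<^esub> f Xa j = (Ya j \<ominus>\<^bsub>Rs j\<^esub> Xa j) \<otimes>\<^bsub>Rs j\<^esub> k j"
      using good_comp[OF fg _ Xc Yc] fc by blast
    have kP: "k \<in> carrier P" using k KPC by blast
    have kj: "k j = \<one>\<^bsub>Rs j\<^esub>" if j: "j < m" "j \<noteq> i" for j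
    proof -
      interpret Rj: ring "Rs j" using Ri j(1) .
      have "f Ya j = f \<one>\<^bsub>P\<^esub> j" by (rule agree[OF f Yc Pone_c j(1)]) (simp add: Ya_def prod_one j)
      then have fy: "f Ya j = \<one>\<^bsub>Rs j\<^esub>" using f1 j by (simp add: prod_one)
      have "f Xa j = f \<zero>\<^bsub>P\<^esub> j" by (rule agree[OF f Xc Pzero_c j(1)]) (simp add: Xa_def emb0_def prod_zero j)
      then have fx: "f Xa j = \<zero>\<^bsub>Rs j\<^esub>" using f0 j by (simp add: prod_zero)
      have kc: "k j \<in> carrier (Rs j)" using P_elem[OF kP j(1)] .
      have "\<one>\<^bsub>Rs j\<^esub> \<ominus>\<^bsub>Rs j\<^esub> \<zero>\<^bsub>Rs j\<^esub> = (\<one>\<^bsub>Rs j\<^esub> \<ominus>\<^bsub>Rs j\<^esub> \<zero>\<^bsub>Rs j\<^esub>) \<otimes>\<^bsub>Rs j\<^esub> k j"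
      proof -
        have "f Ya j \<ominus>\<^bsub>Rs j\<^esub> f Xa j = (Ya j \<ominus>\<^bsub>Rs j\<^esub> Xa j) \<otimes>\<^bsub>Rs j\<^esub> k j" using ee j by blast
        moreover have "Ya j = \<one>\<^bsub>Rs j\<^esub>" "Xa j = \<zero>\<^bsub>Rs j\<^esub>" using j by (simp_all add: Xa_def Ya_def emb0_def)
        ultimately show ?thesis using fy fx by simp
      qed
      then show ?thesis using kc by (simp add: Rj.minus_eq)
    qed
    have fYi: "f Ya i = ?g b" using key[OF Yc i] by (simp add: Ya_def i)
    have fXi: "f Xa i = ?g a" using key[OF Xc i] by (simp add: Xa_def emb0_def i)
    have ei: "?g b \<ominus>\<^bsub>Rs i\<^esub> ?g a = (b \<ominus>\<^bsub>Rs i\<^esub> a) \<otimes>\<^bsub>Rs i\<^esub> k i"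
    proof -
      have "f Ya i \<ominus>\<^bsub>Rs i\<^esub> f Xa i = (Ya i \<ominus>\<^bsub>Rs i\<^esub> Xa i) \<otimes>\<^bsub>Rs i\<^esub> k i" using ee i by blast
      moreover have "Ya i = b" "Xa i = a" using i by (simp_all add: Xa_def Ya_def emb0_def)
      ultimately show ?thesis using fYi fXi by simp
    qed
    have kemb: "k = prod_embed m Rs i (k i)"
    proof
      fix j show "k j = prod_embed m Rs i (k i) j"
      proof (cases "j < m")
        case True then show ?thesis using kj[of j] by (auto simp: prod_embed_def)
      next
        case False then show ?thesis using PiE_arb[OF kP[unfolded prod_carrier], of j] by (simp add: prod_embed_def)
      qed
    qed
    have "k i \<in> Units (Rs i)" using prod_units[OF _ i] k KP(1) by blast
    then have "k i \<in> Ki i" using k kemb by (simp add: Ki_def comp_subgroup_def)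
    then show "\<exists>k\<in>Ki i. ?g b \<ominus>\<^bsub>Rs i\<^esub> ?g a = (b \<ominus>\<^bsub>Rs i\<^esub> a) \<otimes>\<^bsub>Rs i\<^esub> k" using ei by blast
  qed
  have "?g \<in> cyc_aut (Ki i) (Rs i)" using Ki_iff[OF i] gE ginj gg by blast
  then show ?thesis using g0 g1 by (simp add: cyc_aut_stab_def)
qed

lemma K_prod:
  assumes kap: "\<And>i. i < m \<Longrightarrow> \<kappa> i \<in> Ki i"
  shows "(\<lambda>i\<in>{..<m}. \<kappa> i) \<in> K"
proof -
  have kc: "\<And>i. i < m \<Longrightarrow> \<kappa> i \<in> carrier (Rs i)" using kap Ki_props(1) by blast
  have "n \<le> m \<Longrightarrow> (\<lambda>j\<in>{..<m}. if j < n then \<kappa> j else \<one>\<^bsub>Rs j\<^esub>) \<in> K" for n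
  proof (induction n)
    case 0
    have "(\<lambda>j\<in>{..<m}. if j < 0 then \<kappa> j else \<one>\<^bsub>Rs j\<^esub>) = \<one>\<^bsub>P\<^esub>" by (simp add: prod_one)
    then show ?case using KP(2) by simp
  next
    case (Suc n)
    then have n: "n < m" by simp
    have e: "(\<lambda>j\<in>{..<m}. if j < Suc n then \<kappa> j else \<one>\<^bsub>Rs j\<^esub>) =
      (\<lambda>j\<in>{..<m}. if j < n then \<kappa> j else \<one>\<^bsub>Rs j\<^esub>) \<otimes>\<^bsub>P\<^esub> prod_embed m Rs n (\<kappa> n)"
    proof
      fix j show "(\<lambda>j\<in>{..<m}. if j < Suc n then \<kappa> j else \<one>\<^bsub>Rs j\<^esub>) j =
        ((\<lambda>j\<in>{..<m}. if j < n then \<kappa> j else \<one>\<^bsub>Rs j\<^esub>) \<otimes>\<^bsub>P\<^esub> prod_embed m Rs n (\<kappa> n)) j"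
      proof (cases "j < m")
        case True
        interpret Rj: ring "Rs j" using Ri True .
        show ?thesis using True kc[OF True] by (auto simp: prod_mult prod_embed_def)
      qed (simp add: prod_mult)
    qed
    have em: "prod_embed m Rs n (\<kappa> n) \<in> K" using kap[OF n] by (simp add: Ki_def comp_subgroup_def)
    have ih: "(\<lambda>j\<in>{..<m}. if j < n then \<kappa> j else \<one>\<^bsub>Rs j\<^esub>) \<in> K" using n by (intro Suc.IH) simp
    show ?case unfolding e by (rule KP(3)[OF ih em])
  qed
  moreover have "(\<lambda>j\<in>{..<m}. if j < m then \<kappa> j else \<one>\<^bsub>Rs j\<^esub>) = (\<lambda>j\<in>{..<m}. \<kappa> j)"
    by (rule restrict_ext) simp
  ultimately show ?thesis by (metis order_refl)
qed

lemma prod_map_app: "z \<in> carrier P \<Longrightarrow> prod_map m Rs fs z = (\<lambda>i\<in>{..<m}. fs i (z i))"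
  by (simp add: prod_map_def)

lemma prod_stab:
  assumes fs: "\<And>i. i < m \<Longrightarrow> fs i \<in> cyc_aut_stab (Ki i) (Rs i) \<zero>\<^bsub>Rs i\<^esub> \<one>\<^bsub>Rs i\<^esub>"
  shows "prod_map m Rs fs \<in> cyc_aut_stab K P \<zero>\<^bsub>P\<^esub> \<one>\<^bsub>P\<^esub>"
proof -
  let ?F = "prod_map m Rs fs"
  have fa: "\<And>i. i < m \<Longrightarrow> fs i \<in> cyc_aut (Ki i) (Rs i)" using fs by (simp add: cyc_aut_stab_def)
  have f0: "\<And>i. i < m \<Longrightarrow> fs i \<zero>\<^bsub>Rs i\<^esub> = \<zero>\<^bsub>Rs i\<^esub>" using fs by (simp add: cyc_aut_stab_def)
  have f1: "\<And>i. i < m \<Longrightarrow> fs i \<one>\<^bsub>Rs i\<^esub> = \<one>\<^bsub>Rs i\<^esub>" using fs by (simp add: cyc_aut_stab_def)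
  have fE: "\<And>i. i < m \<Longrightarrow> fs i \<in> carrier (Rs i) \<rightarrow>\<^sub>E carrier (Rs i)"
    and finj: "\<And>i. i < m \<Longrightarrow> inj_on (fs i) (carrier (Rs i))"
    and fg: "\<And>i. i < m \<Longrightarrow> good (Ki i) (Rs i) (fs i)"
    using fa Ki_iff by blast+
  have Fc: "\<And>z. z \<in> carrier P \<Longrightarrow> ?F z \<in> carrier P"
  proof -
    fix z assume z: "z \<in> carrier P"
    have "\<And>i. i < m \<Longrightarrow> fs i (z i) \<in> carrier (Rs i)" using fE P_elem[OF z] by blast
    then show "?F z \<in> carrier P" using z by (simp add: prod_map_app prod_carrier)
  qed
  have FE: "?F \<in> carrier P \<rightarrow>\<^sub>E carrier P"
    using Fc by (auto simp: prod_map_def)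
  have Finj: "inj_on ?F (carrier P)"
  proof (rule inj_onI)
    fix x y assume x: "x \<in> carrier P" and y: "y \<in> carrier P" and e: "?F x = ?F y"
    show "x = y"
    proof (rule PiE_ext[OF x[unfolded prod_carrier] y[unfolded prod_carrier]])
      fix i assume "i \<in> {..<m}"
      then have i: "i < m" by simp
      have "fs i (x i) = fs i (y i)" using fun_cong[OF e, of i] i x y by (simp add: prod_map_app)
      then show "x i = y i" using inj_onD[OF finj[OF i]] P_elem[OF x i] P_elem[OF y i] by blast
    qed
  qed
  have Fg: "good K P ?F" unfolding good_def
  proof (intro ballI)
    fix x y assume x: "x \<in> carrier P" and y: "y \<in> carrier P"
    have "\<forall>i\<in>{..<m}. \<exists>\<kappa>\<in>Ki i. fs i (y i) \<ominus>\<^bsub>Rs i\<^esub> fs i (x i) = (y i \<ominus>\<^bsub>Rs i\<^esub> x i) \<otimes>\<^bsub>Rs i\<^esub> \<kappa>"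
      using fg P_elem[OF x] P_elem[OF y] by (auto simp: good_def)
    then obtain \<kappa> where kap: "\<forall>i\<in>{..<m}. \<kappa> i \<in> Ki i \<and>
      fs i (y i) \<ominus>\<^bsub>Rs i\<^esub> fs i (x i) = (y i \<ominus>\<^bsub>Rs i\<^esub> x i) \<otimes>\<^bsub>Rs i\<^esub> \<kappa> i"
      by metis
    let ?k = "\<lambda>i\<in>{..<m}. \<kappa> i"
    have kK: "?k \<in> K" using K_prod[of \<kappa>] kap by blast
    have e1: "?F y \<ominus>\<^bsub>P\<^esub> ?F x = (\<lambda>i\<in>{..<m}. ?F y i \<ominus>\<^bsub>Rs i\<^esub> ?F x i)"
      by (rule prod_minus[OF Fc[OF y] Fc[OF x]])
    have e2: "y \<ominus>\<^bsub>P\<^esub> x = (\<lambda>i\<in>{..<m}. y i \<ominus>\<^bsub>Rs i\<^esub> x i)"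
      by (rule prod_minus[OF y x])
    have "?F y \<ominus>\<^bsub>P\<^esub> ?F x = (y \<ominus>\<^bsub>P\<^esub> x) \<otimes>\<^bsub>P\<^esub> ?k"
      unfolding e1 e2 using kap by (auto simp: prod_mult prod_map_app[OF x] prod_map_app[OF y] intro!: restrict_ext)
    then show "\<exists>k\<in>K. ?F y \<ominus>\<^bsub>P\<^esub> ?F x = (y \<ominus>\<^bsub>P\<^esub> x) \<otimes>\<^bsub>P\<^esub> k" using kK by blast
  qed
  have "?F \<in> cyc_aut K P" using P_iff FE Finj Fg by blast
  moreover have "?F \<zero>\<^bsub>P\<^esub> = \<zero>\<^bsub>P\<^esub>" unfolding prod_map_app[OF Pzero_c] using f0 by (auto simp: prod_zero intro!: restrict_ext)
  moreover have "?F \<one>\<^bsub>P\<^esub> = \<one>\<^bsub>P\<^esub>" unfolding prod_map_app[OF Pone_c] using f1 by (auto simp: prod_one intro!: restrict_ext)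
  ultimately show ?thesis by (simp add: cyc_aut_stab_def)
qed

lemma Ki_inv:
  assumes i: "i < m" and a: "a \<in> Ki i"
  shows "inv\<^bsub>Rs i\<^esub> a \<in> Ki i"
proof -
  interpret R: ring "Rs i" using Ri i .
  have au: "a \<in> Units (Rs i)" and aK: "prod_embed m Rs i a \<in> K" using a by (auto simp: Ki_def comp_subgroup_def)
  have ac: "a \<in> carrier (Rs i)" "inv\<^bsub>Rs i\<^esub> a \<in> carrier (Rs i)" using au by auto
  have iu: "inv\<^bsub>Rs i\<^esub> a \<in> Units (Rs i)" using au by simp
  let ?u = "prod_embed m Rs i a" and ?v = "prod_embed m Rs i (inv\<^bsub>Rs i\<^esub> a)"
  have uc: "?u \<in> carrier P" "?v \<in> carrier P" using embed_carrier[OF i] ac by auto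
  have "?u \<otimes>\<^bsub>P\<^esub> ?v = \<one>\<^bsub>P\<^esub>" using au i by (auto simp: prod_embed_def prod_mult prod_one intro!: restrict_ext)
  moreover have "?v \<otimes>\<^bsub>P\<^esub> ?u = \<one>\<^bsub>P\<^esub>" using au i by (auto simp: prod_embed_def prod_mult prod_one intro!: restrict_ext)
  ultimately have "?v = inv\<^bsub>P\<^esub> ?u" using monoid.inv_unique'[OF Pmon uc] by blast
  then have "?v \<in> K" using KP(4)[OF aK] by simp
  then show ?thesis using iu by (simp add: Ki_def comp_subgroup_def)
qed

lemma stab_eq:
  "cyc_aut_stab K P \<zero>\<^bsub>P\<^esub> \<one>\<^bsub>P\<^esub> =
     {prod_map m Rs fs | fs. \<forall>i < m. fs i \<in> cyc_aut_stab (Ki i) (Rs i) \<zero>\<^bsub>Rs i\<^esub> \<one>\<^bsub>Rs i\<^esub>}"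
proof
  show "cyc_aut_stab K P \<zero>\<^bsub>P\<^esub> \<one>\<^bsub>P\<^esub> \<subseteq> {prod_map m Rs fs | fs. \<forall>i < m. fs i \<in> cyc_aut_stab (Ki i) (Rs i) \<zero>\<^bsub>Rs i\<^esub> \<one>\<^bsub>Rs i\<^esub>}"
  proof
    fix f assume f: "f \<in> cyc_aut_stab K P \<zero>\<^bsub>P\<^esub> \<one>\<^bsub>P\<^esub>"
    then have "f = prod_map m Rs (compf f)" using f_prod by (simp add: cyc_aut_stab_def)
    then show "f \<in> {prod_map m Rs fs | fs. \<forall>i < m. fs i \<in> cyc_aut_stab (Ki i) (Rs i) \<zero>\<^bsub>Rs i\<^esub> \<one>\<^bsub>Rs i\<^esub>}"
      using comp_stab[OF f] by blast
  qed
  show "{prod_map m Rs fs | fs. \<forall>i < m. fs i \<in> cyc_aut_stab (Ki i) (Rs i) \<zero>\<^bsub>Rs i\<^esub> \<one>\<^bsub>Rs i\<^esub>} \<subseteq> cyc_aut_stab K P \<zero>\<^bsub>P\<^esub> \<one>\<^bsub>P\<^esub>"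
    using prod_stab by blast
qed

lemma M1:
  assumes fs: "\<And>i. i < m \<Longrightarrow> fs i \<in> ring_iso (Rs i) (Rs i)"
    and Fs: "prod_map m Rs fs \<in> cyc_aut_stab K P \<zero>\<^bsub>P\<^esub> \<one>\<^bsub>P\<^esub>"
  shows "prod_map m Rs fs \<in> ring_iso P P"
proof -
  let ?F = "prod_map m Rs fs"
  have Fa: "?F \<in> cyc_aut K P" using Fs by (simp add: cyc_aut_stab_def)
  have bij: "bij_betw ?F (carrier P) (carrier P)" and FE: "?F \<in> carrier P \<rightarrow>\<^sub>E carrier P"
    using Fa by (auto simp: cyc_aut_def)
  have h: "\<And>i. i < m \<Longrightarrow> fs i \<in> ring_hom (Rs i) (Rs i)" using fs by (simp add: ring_iso_def)
  have "?F \<in> ring_hom P P"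
  proof (rule ring_hom_memI)
    show "\<And>x. x \<in> carrier P \<Longrightarrow> ?F x \<in> carrier P" using FE by auto
    fix x y assume x: "x \<in> carrier P" and y: "y \<in> carrier P"
    have xy: "x \<otimes>\<^bsub>P\<^esub> y \<in> carrier P" "x \<oplus>\<^bsub>P\<^esub> y \<in> carrier P"
      using x y monoid.m_closed[OF Pmon] ring.ring_simprules(1)[OF Pring] by auto
    show "?F (x \<otimes>\<^bsub>P\<^esub> y) = ?F x \<otimes>\<^bsub>P\<^esub> ?F y"
      unfolding prod_map_app[OF xy(1)] prod_map_app[OF x] prod_map_app[OF y]
      using h P_elem[OF x] P_elem[OF y] by (auto simp: prod_mult ring_hom_mult intro!: restrict_ext)
    show "?F (x \<oplus>\<^bsub>P\<^esub> y) = ?F x \<oplus>\<^bsub>P\<^esub> ?F y"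
      unfolding prod_map_app[OF xy(2)] prod_map_app[OF x] prod_map_app[OF y]
      using h P_elem[OF x] P_elem[OF y] by (auto simp: prod_add ring_hom_add intro!: restrict_ext)
  next
    show "?F \<one>\<^bsub>P\<^esub> = \<one>\<^bsub>P\<^esub>" using Fs by (simp add: cyc_aut_stab_def)
  qed
  then show ?thesis using bij by (simp add: ring_iso_def)
qed

lemma id_stab:
  assumes j: "j < m"
  shows "(\<lambda>x\<in>carrier (Rs j). x) \<in> cyc_aut_stab (Ki j) (Rs j) \<zero>\<^bsub>Rs j\<^esub> \<one>\<^bsub>Rs j\<^esub>"
proof -
  interpret R: ring "Rs j" using Ri j .
  have "good (Ki j) (Rs j) (\<lambda>x\<in>carrier (Rs j). x)" unfolding good_def
  proof (intro ballI)
    fix x y assume x: "x \<in> carrier (Rs j)" and y: "y \<in> carrier (Rs j)"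
    show "\<exists>k\<in>Ki j. (\<lambda>x\<in>carrier (Rs j). x) y \<ominus>\<^bsub>Rs j\<^esub> (\<lambda>x\<in>carrier (Rs j). x) x = (y \<ominus>\<^bsub>Rs j\<^esub> x) \<otimes>\<^bsub>Rs j\<^esub> k"
      by (rule bexI[OF _ Ki_props(2)[OF j]]) (use x y in simp)
  qed
  moreover have "inj_on (\<lambda>x\<in>carrier (Rs j). x) (carrier (Rs j))" by (auto simp: inj_on_def)
  moreover have "(\<lambda>x\<in>carrier (Rs j). x) \<in> carrier (Rs j) \<rightarrow>\<^sub>E carrier (Rs j)" by auto
  ultimately have "(\<lambda>x\<in>carrier (Rs j). x) \<in> cyc_aut (Ki j) (Rs j)" using Ki_iff[OF j] by blast
  then show ?thesis by (simp add: cyc_aut_stab_def)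
qed

lemma M2:
  assumes i: "i < m" and g: "g \<in> cyc_aut_stab (Ki i) (Rs i) \<zero>\<^bsub>Rs i\<^esub> \<one>\<^bsub>Rs i\<^esub>"
    and H: "\<And>fs. (\<forall>j<m. fs j \<in> cyc_aut_stab (Ki j) (Rs j) \<zero>\<^bsub>Rs j\<^esub> \<one>\<^bsub>Rs j\<^esub>) \<Longrightarrow> prod_map m Rs fs \<in> ring_iso P P"
  shows "g \<in> ring_iso (Rs i) (Rs i)"
proof -
  interpret R: ring "Rs i" using Ri i .
  define fs where "fs = (\<lambda>j. if j = i then g else (\<lambda>x\<in>carrier (Rs j). x))"
  have "\<forall>j<m. fs j \<in> cyc_aut_stab (Ki j) (Rs j) \<zero>\<^bsub>Rs j\<^esub> \<one>\<^bsub>Rs j\<^esub>"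
    using g id_stab by (simp add: fs_def)
  then have Fi: "prod_map m Rs fs \<in> ring_iso P P" using H by blast
  then have Fh: "prod_map m Rs fs \<in> ring_hom P P" by (simp add: ring_iso_def)
  let ?F = "prod_map m Rs fs"
  have Fz: "\<And>z. z \<in> carrier P \<Longrightarrow> ?F z i = g (z i)" using i by (simp add: prod_map_app fs_def)
  have ga: "g \<in> cyc_aut (Ki i) (Rs i)" and g1: "g \<one>\<^bsub>Rs i\<^esub> = \<one>\<^bsub>Rs i\<^esub>" using g by (auto simp: cyc_aut_stab_def)
  have gE: "g \<in> carrier (Rs i) \<rightarrow>\<^sub>E carrier (Rs i)" and gb: "bij_betw g (carrier (Rs i)) (carrier (Rs i))"
    using ga by (auto simp: cyc_aut_def)
  have "g \<in> ring_hom (Rs i) (Rs i)"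
  proof (rule ring_hom_memI)
    show "\<And>x. x \<in> carrier (Rs i) \<Longrightarrow> g x \<in> carrier (Rs i)" using gE by auto
    fix a b assume a: "a \<in> carrier (Rs i)" and b: "b \<in> carrier (Rs i)"
    have Xa: "emb0 i a \<in> carrier P" and Xb: "emb0 i b \<in> carrier P" using emb0_c[OF i] a b by auto
    have ea: "emb0 i a i = a" "emb0 i b i = b" using i by (simp_all add: emb0_def)
    have m1: "emb0 i a \<otimes>\<^bsub>P\<^esub> emb0 i b \<in> carrier P" using monoid.m_closed[OF Pmon Xa Xb] .
    have m2: "emb0 i a \<oplus>\<^bsub>P\<^esub> emb0 i b \<in> carrier P" using ring.ring_simprules(1)[OF Pring Xa Xb] .
    have "g (a \<otimes>\<^bsub>Rs i\<^esub> b) = ?F (emb0 i a \<otimes>\<^bsub>P\<^esub> emb0 i b) i"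
      using Fz[OF m1] ea i by (simp add: prod_mult)
    also have "\<dots> = (?F (emb0 i a) \<otimes>\<^bsub>P\<^esub> ?F (emb0 i b)) i" using ring_hom_mult[OF Fh Xa Xb] by simp
    also have "\<dots> = g a \<otimes>\<^bsub>Rs i\<^esub> g b" using Fz[OF Xa] Fz[OF Xb] ea i by (simp add: prod_mult)
    finally show "g (a \<otimes>\<^bsub>Rs i\<^esub> b) = g a \<otimes>\<^bsub>Rs i\<^esub> g b" .
    have "g (a \<oplus>\<^bsub>Rs i\<^esub> b) = ?F (emb0 i a \<oplus>\<^bsub>P\<^esub> emb0 i b) i"
      using Fz[OF m2] ea i by (simp add: prod_add)
    also have "\<dots> = (?F (emb0 i a) \<oplus>\<^bsub>P\<^esub> ?F (emb0 i b)) i" using ring_hom_add[OF Fh Xa Xb] by simp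
    also have "\<dots> = g a \<oplus>\<^bsub>Rs i\<^esub> g b" using Fz[OF Xa] Fz[OF Xb] ea i by (simp add: prod_add)
    finally show "g (a \<oplus>\<^bsub>Rs i\<^esub> b) = g a \<oplus>\<^bsub>Rs i\<^esub> g b" .
  next
    show "g \<one>\<^bsub>Rs i\<^esub> = \<one>\<^bsub>Rs i\<^esub>" by (rule g1)
  qed
  then show ?thesis using gb by (simp add: ring_iso_def)
qed

lemma normal_eq:
  "cyc_normal K P \<longleftrightarrow> (\<forall>i < m. cyc_normal (Ki i) (Rs i))"
proof -
  have nP: "cyc_normal K P \<longleftrightarrow> (\<forall>f\<in>cyc_aut_stab K P \<zero>\<^bsub>P\<^esub> \<one>\<^bsub>P\<^esub>. f \<in> ring_iso P P)"
    by (rule normal_iff[OF Pcr Pfin KP])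
  have nI: "cyc_normal (Ki i) (Rs i) \<longleftrightarrow> (\<forall>g\<in>cyc_aut_stab (Ki i) (Rs i) \<zero>\<^bsub>Rs i\<^esub> \<one>\<^bsub>Rs i\<^esub>. g \<in> ring_iso (Rs i) (Rs i))"
    if i: "i < m" for i
  proof (rule normal_iff[OF cr[OF i] fin[OF i]])
    show "Ki i \<subseteq> Units (Rs i)" by (auto simp: Ki_def comp_subgroup_def)
  qed (use Ki_props[OF i] Ki_inv[OF i] in auto)
  show ?thesis
  proof
    assume N: "cyc_normal K P"
    show "\<forall>i < m. cyc_normal (Ki i) (Rs i)"
    proof (intro allI impI)
      fix i assume i: "i < m"
      have H: "prod_map m Rs fs \<in> ring_iso P P" if "\<forall>j<m. fs j \<in> cyc_aut_stab (Ki j) (Rs j) \<zero>\<^bsub>Rs j\<^esub> \<one>\<^bsub>Rs j\<^esub>" for fs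
        using N nP prod_stab that by blast
      show "cyc_normal (Ki i) (Rs i)" using nI[OF i] M2[OF i _ H] by blast
    qed
  next
    assume N: "\<forall>i < m. cyc_normal (Ki i) (Rs i)"
    have "f \<in> ring_iso P P" if f: "f \<in> cyc_aut_stab K P \<zero>\<^bsub>P\<^esub> \<one>\<^bsub>P\<^esub>" for f
    proof -
      obtain fs where fe: "f = prod_map m Rs fs" and fs: "\<forall>i<m. fs i \<in> cyc_aut_stab (Ki i) (Rs i) \<zero>\<^bsub>Rs i\<^esub> \<one>\<^bsub>Rs i\<^esub>"
        using f stab_eq by blast
      have "\<And>i. i < m \<Longrightarrow> fs i \<in> ring_iso (Rs i) (Rs i)" using N nI fs by blast
      then show ?thesis using M1 f fe by blast
    qed
    then show "cyc_normal K P" using nP by blast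
  qed
qed

end

theorem theorem1p3:
  fixes m :: nat and Rs :: "nat \<Rightarrow> ('a, 'b) ring_scheme" and K :: "(nat \<Rightarrow> 'a) set"
  assumes "\<And>i. i < m \<Longrightarrow> cring (Rs i)"
    and "\<And>i. i < m \<Longrightarrow> finite (carrier (Rs i))"
    and "subgroup K (units_of (prod_ring m Rs))"
  shows "cyc_aut_stab K (prod_ring m Rs) \<zero>\<^bsub>prod_ring m Rs\<^esub> \<one>\<^bsub>prod_ring m Rs\<^esub> =
           {prod_map m Rs fs | fs. \<forall>i < m.
              fs i \<in> cyc_aut_stab (comp_subgroup m Rs K i) (Rs i) \<zero>\<^bsub>Rs i\<^esub> \<one>\<^bsub>Rs i\<^esub>}
         \<and> (cyc_normal K (prod_ring m Rs) \<longleftrightarrow>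
              (\<forall>i < m. cyc_normal (comp_subgroup m Rs K i) (Rs i)))"
  using stab_eq[OF assms] normal_eq[OF assms] by (simp add: Ki_def[OF assms])

end
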